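(* Let $(h_n)_{n\ge1}$ be a sequence taking values in a finite set of maps of the form $h(z)=az+b$ with $a>0$ and $\operatorname{Re}(b)>0$; write $h_n(z)=a_nz+b_n$, and let $H_n=h_1\cdots h_n$. Then $(H_n)$ is of limit-disc type if and only if $\sum_{n=1}^\infty a_1a_2\cdots a_n<+\infty$. Furthermore, if $(H_n)$ is of limit-disc type and converges ideally to a point $q$, then $q\neq\infty$.
   Context: $\mathbb{K}$ is the open right half-plane $\{\operatorname{Re}z>0\}$; each $h_n$ maps $\mathbb{K}$ strictly inside itself. $(H_n)$ is of limit-disc type if $\bigcap_n H_n(\overline{\mathbb{K}})$ (closures in $\overline{\mathbb{C}}$) is a disc (of positive chordal radius), rather than a single point. Möbius maps act on $\mathbb{H}^3=\{(x,y,t):t>0\}$ via Poincaré extension, $j=(0,0,1)$; $(H_n)$ converges ideally to $q\in\overline{\mathbb{C}}$ if $H_n(j)\to q$ in the chordal metric. *)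

theory Defs
  imports "HOL-Analysis.Analysis"
begin

text \<open>Extended complex plane: complex option, None = infinity.
  Closed upper half-space with boundary: points (z,t), t >= 0, plus infinity:
  (complex * real) option.  Chordal metric on R^3 u {infinity}.\<close>

fun chordal :: "(complex \<times> real) option \<Rightarrow> (complex \<times> real) option \<Rightarrow> real" where
  "chordal (Some (z, s)) (Some (w, t)) =
     2 * sqrt ((cmod (z - w))\<^sup>2 + (s - t)\<^sup>2) / sqrt ((1 + (cmod z)\<^sup>2 + s\<^sup>2) * (1 + (cmod w)\<^sup>2 + t\<^sup>2))"
| "chordal (Some (z, s)) None = 2 / sqrt (1 + (cmod z)\<^sup>2 + s\<^sup>2)"
| "chordal None (Some (w, t)) = 2 / sqrt (1 + (cmod w)\<^sup>2 + t\<^sup>2)"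
| "chordal None None = 0"

definition emb_hat :: "complex option \<Rightarrow> (complex \<times> real) option" where
  "emb_hat = map_option (\<lambda>z. (z, 0))"

definition chordal_hat :: "complex option \<Rightarrow> complex option \<Rightarrow> real" where
  "chordal_hat p q = chordal (emb_hat p) (emb_hat q)"

definition aff_hat :: "real \<times> complex \<Rightarrow> complex option \<Rightarrow> complex option" where
  "aff_hat h = map_option (\<lambda>z. of_real (fst h) * z + snd h)"

definition poincare :: "real \<times> complex \<Rightarrow> complex \<times> real \<Rightarrow> complex \<times> real" where
  "poincare h p = (of_real (fst h) * fst p + snd h, \<bar>fst h\<bar> * snd p)"

primrec comp_upto :: "(nat \<Rightarrow> 'a \<Rightarrow> 'a) \<Rightarrow> nat \<Rightarrow> 'a \<Rightarrow> 'a" where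
  "comp_upto f 0 = id"
| "comp_upto f (Suc n) = comp_upto f n \<circ> f (Suc n)"

definition Kbar :: "complex option set" where
  "Kbar = insert None (Some ` {z. Re z \<ge> 0})"

definition limit_disc_type :: "(nat \<Rightarrow> real \<times> complex) \<Rightarrow> bool" where
  "limit_disc_type h \<longleftrightarrow>
     (\<exists>c r. r > 0 \<and>
        (\<Inter>n\<in>{1..}. comp_upto (\<lambda>k. aff_hat (h k)) n ` Kbar) = {w. chordal_hat c w \<le> r})"

definition converges_ideally :: "(nat \<Rightarrow> real \<times> complex) \<Rightarrow> complex option \<Rightarrow> bool" where
  "converges_ideally h q \<longleftrightarrow>
     (\<lambda>n. chordal (Some (comp_upto (\<lambda>k. poincare (h k)) n (0, 1))) (emb_hat q)) \<longlonglongrightarrow> 0"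

end

theory Submission
  imports Defs
begin

definition AA :: "(nat \<Rightarrow> real \<times> complex) \<Rightarrow> nat \<Rightarrow> real" where
  "AA h n = (\<Prod>k=1..n. fst (h k))"

definition BB :: "(nat \<Rightarrow> real \<times> complex) \<Rightarrow> nat \<Rightarrow> complex" where
  "BB h n = (\<Sum>j<n. of_real (AA h j) * snd (h (Suc j)))"

lemma AA_Suc: "AA h (Suc n) = AA h n * fst (h (Suc n))"
  by (simp add: AA_def)

lemma BB_Suc: "BB h (Suc n) = BB h n + of_real (AA h n) * snd (h (Suc n))"
  by (simp add: BB_def)

lemma comp_aff: "comp_upto (\<lambda>k. aff_hat (h k)) n = aff_hat (AA h n, BB h n)"
proof (induction n)
  case 0
  show ?case by (rule ext, simp add: aff_hat_def AA_def BB_def option.map_ident)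
next
  case (Suc n)
  show ?case
  proof (rule ext)
    fix x show "comp_upto (\<lambda>k. aff_hat (h k)) (Suc n) x = aff_hat (AA h (Suc n), BB h (Suc n)) x"
      using Suc by (cases x) (simp_all add: aff_hat_def AA_Suc BB_Suc algebra_simps)
  qed
qed

lemma comp_poinc: "comp_upto (\<lambda>k. poincare (h k)) n = poincare (AA h n, BB h n)"
proof (induction n)
  case 0
  show ?case by (rule ext, simp add: poincare_def AA_def BB_def)
next
  case (Suc n)
  show ?case
  proof (rule ext)
    fix x show "comp_upto (\<lambda>k. poincare (h k)) (Suc n) x = poincare (AA h (Suc n), BB h (Suc n)) x"
      by (simp add: Suc.IH) (simp add: poincare_def AA_Suc BB_Suc algebra_simps abs_mult)
  qed
qed

lemma aff_image:
  assumes "A > 0"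
  shows "aff_hat (A, B) ` Kbar = insert None (Some ` {w. Re B \<le> Re w})"
proof -
  have "Some w \<in> aff_hat (A, B) ` Kbar" if "Re B \<le> Re w" for w
  proof -
    have "Some ((w - B) / of_real A) \<in> Kbar"
      using that assms by (simp add: Kbar_def Re_divide_of_real)
    moreover have "aff_hat (A, B) (Some ((w - B) / of_real A)) = Some w"
      using assms by (simp add: aff_hat_def)
    ultimately show ?thesis by (metis image_eqI)
  qed
  moreover have "None \<in> aff_hat (A, B) ` Kbar"
    by (metis Kbar_def aff_hat_def image_eqI insertI1 option.map_disc_iff)
  moreover have "x \<in> insert None (Some ` {w. Re B \<le> Re w})" if "x \<in> aff_hat (A, B) ` Kbar" for x
    using that assms by (auto simp: Kbar_def aff_hat_def)
  ultimately show ?thesis by auto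
qed

lemma ball_halfplane:
  fixes \<beta> :: real
  defines "\<gamma> \<equiv> \<beta> + sqrt (\<beta>\<^sup>2 + 1)"
  shows "insert None (Some ` {w. \<beta> \<le> Re w}) = {w. chordal_hat (Some (of_real \<gamma>)) w \<le> 2 / sqrt (1 + \<gamma>\<^sup>2)}"
proof -
  have sq: "sqrt (\<beta>\<^sup>2 + 1) > \<bar>\<beta>\<bar>"
    by (simp add: real_less_rsqrt)
  have gpos: "\<gamma> > 0" using sq unfolding \<gamma>_def by linarith
  have geq: "\<gamma>\<^sup>2 - 2 * \<beta> * \<gamma> - 1 = 0"
    unfolding \<gamma>_def by (simp add: power2_eq_square algebra_simps)
  have key: "chordal_hat (Some (of_real \<gamma>)) (Some w) \<le> 2 / sqrt (1 + \<gamma>\<^sup>2) \<longleftrightarrow> \<beta> \<le> Re w" for w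
  proof -
    have p1: "sqrt (1 + \<gamma>\<^sup>2) > 0" by (simp add: add_pos_nonneg)
    have p2: "sqrt (1 + (cmod w)\<^sup>2) > 0" by (simp add: add_pos_nonneg)
    have "chordal_hat (Some (of_real \<gamma>)) (Some w) = 2 * cmod (of_real \<gamma> - w) / (sqrt (1 + \<gamma>\<^sup>2) * sqrt (1 + (cmod w)\<^sup>2))"
      by (simp add: chordal_hat_def emb_hat_def real_sqrt_mult)
    also have "\<dots> \<le> 2 / sqrt (1 + \<gamma>\<^sup>2) \<longleftrightarrow> cmod (of_real \<gamma> - w) \<le> sqrt (1 + (cmod w)\<^sup>2)"
      using p1 p2 by (simp add: divide_simps mult.commute mult.left_commute)
    also have "\<dots> \<longleftrightarrow> (cmod (of_real \<gamma> - w))\<^sup>2 \<le> 1 + (cmod w)\<^sup>2"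
      by (metis norm_ge_zero real_le_rsqrt real_sqrt_le_iff real_sqrt_pow2_iff real_sqrt_power sqrt_le_D)
    also have "\<dots> \<longleftrightarrow> \<gamma>\<^sup>2 - 2 * \<gamma> * Re w \<le> 1"
      unfolding cmod_power2[of "of_real \<gamma> - w"] cmod_power2[of w] by (simp add: power2_eq_square algebra_simps)
    also have "\<dots> \<longleftrightarrow> \<beta> \<le> Re w"
    proof -
      have "\<gamma>\<^sup>2 - 2 * \<gamma> * Re w \<le> 1 \<longleftrightarrow> 2 * \<gamma> * \<beta> \<le> 2 * \<gamma> * Re w" using geq by (auto simp: algebra_simps)
      also have "\<dots> \<longleftrightarrow> \<beta> \<le> Re w" using gpos by simp
      finally show ?thesis .
    qed
    finally show ?thesis .
  qed
  show ?thesis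
  proof (rule set_eqI)
    fix x show "x \<in> insert None (Some ` {w. \<beta> \<le> Re w}) \<longleftrightarrow> x \<in> {w. chordal_hat (Some (of_real \<gamma>)) w \<le> 2 / sqrt (1 + \<gamma>\<^sup>2)}"
      using key by (cases x) (auto simp: chordal_hat_def emb_hat_def)
  qed
qed

lemma sum_AA_shift: "(\<Sum>k\<le>N. AA h (Suc k)) + 1 = (\<Sum>j<Suc (Suc N). AA h j)"
proof -
  have "AA h 0 = 1" by (simp add: AA_def)
  moreover have "(\<Sum>j<Suc (Suc N). AA h j) = AA h 0 + (\<Sum>k<Suc N. AA h (Suc k))"
    by (rule sum.lessThan_Suc_shift)
  ultimately show ?thesis by (simp add: lessThan_Suc_atMost)
qed

theorem lemma3p1:
  fixes S :: "(real \<times> complex) set" and h :: "nat \<Rightarrow> real \<times> complex"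
  assumes "finite S"
    and "\<forall>p\<in>S. fst p > 0 \<and> Re (snd p) > 0"
    and "\<forall>n\<ge>1. h n \<in> S"
  shows "(limit_disc_type h \<longleftrightarrow> summable (\<lambda>n. \<Prod>k=1..Suc n. fst (h k)))
         \<and> (\<forall>q. limit_disc_type h \<and> converges_ideally h q \<longrightarrow> q \<noteq> None)"
proof -
  have apos: "fst (h k) > 0" if "k \<ge> 1" for k using assms that by auto
  have AApos: "AA h n > 0" for n
    unfolding AA_def by (rule prod_pos) (use apos in auto)
  have Sne: "S \<noteq> {}" using assms(3) by auto
  define m where "m = Min ((\<lambda>p. Re (snd p)) ` S)"
  define M where "M = Max ((\<lambda>p. cmod (snd p)) ` S)"
  have mpos: "m > 0" unfolding m_def using assms(1,2) Sne by (subst Min_gr_iff) auto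
  have mle: "m \<le> Re (snd (h k))" if "k \<ge> 1" for k
    unfolding m_def using assms(1,3) that by (intro Min_le) auto
  have Mge: "cmod (snd (h k)) \<le> M" if "k \<ge> 1" for k
    unfolding M_def using assms(1,3) that by (intro Max_ge) auto
  have M0: "M \<ge> 0" using Mge[of 1] norm_ge_zero order_trans by blast
  have ReB: "Re (BB h n) = (\<Sum>j<n. AA h j * Re (snd (h (Suc j))))" for n
    by (simp add: BB_def)
  have Blow: "m * (\<Sum>j<n. AA h j) \<le> Re (BB h n)" for n
    unfolding ReB sum_distrib_left
    by (intro sum_mono) (use AApos mle in \<open>auto intro: mult_left_mono simp: mult.commute\<close>)
  have Bup: "cmod (BB h n) \<le> M * (\<Sum>j<n. AA h j)" for n
  proof -
    have "cmod (BB h n) \<le> (\<Sum>j<n. cmod (of_real (AA h j) * snd (h (Suc j))))"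
      unfolding BB_def by (rule norm_sum)
    also have "\<dots> \<le> (\<Sum>j<n. M * AA h j)"
    proof (intro sum_mono)
      fix j
      have "AA h j * cmod (snd (h (Suc j))) \<le> AA h j * M"
        using AApos[of j] Mge[of "Suc j"] by (intro mult_left_mono) auto
      then show "cmod (of_real (AA h j) * snd (h (Suc j))) \<le> M * AA h j"
        using AApos[of j] by (simp add: norm_mult mult.commute)
    qed
    finally show ?thesis by (simp add: sum_distrib_left)
  qed
  define I where "I = (\<Inter>n\<in>{1..}. comp_upto (\<lambda>k. aff_hat (h k)) n ` Kbar)"
  have I_eq: "I = insert None (Some ` {w. \<forall>n\<ge>1. Re (BB h n) \<le> Re w})"
  proof (rule set_eqI)
    fix x show "x \<in> I \<longleftrightarrow> x \<in> insert None (Some ` {w. \<forall>n\<ge>1. Re (BB h n) \<le> Re w})"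
      unfolding I_def comp_aff aff_image[OF AApos] by (cases x) auto
  qed
  have ldt_iff: "limit_disc_type h \<longleftrightarrow> (\<exists>c r. r > 0 \<and> I = {w. chordal_hat c w \<le> r})"
    unfolding limit_disc_type_def I_def ..
  have part1: "limit_disc_type h \<longleftrightarrow> summable (\<lambda>n. \<Prod>k=1..Suc n. fst (h k))"
  proof
    assume "limit_disc_type h"
    then obtain c r where r: "r > 0" and Ic: "I = {w. chordal_hat c w \<le> r}" using ldt_iff by blast
    obtain w where w: "Some w \<in> I"
    proof (cases c)
      case None
      define x where "x = 2 / r"
      have xpos: "x > 0" using r by (simp add: x_def)
      have "x \<le> sqrt (1 + x\<^sup>2)" by (rule real_le_rsqrt) simp
      then have "2 / sqrt (1 + x\<^sup>2) \<le> 2 / x" using xpos by (intro divide_left_mono) (auto intro!: mult_pos_pos add_pos_nonneg)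
      also have "\<dots> = r" using r by (simp add: x_def)
      finally have "chordal_hat c (Some (of_real x)) \<le> r"
        using None by (simp add: chordal_hat_def emb_hat_def)
      then show ?thesis using that Ic by auto
    next
      case (Some z)
      have "chordal_hat c (Some z) \<le> r" using Some r by (simp add: chordal_hat_def emb_hat_def)
      then show ?thesis using that Ic by auto
    qed
    then have wb: "Re (BB h n) \<le> Re w" if "n \<ge> 1" for n using I_eq that by auto
    show "summable (\<lambda>n. \<Prod>k=1..Suc n. fst (h k))"
    proof (rule bounded_imp_summable)
      fix n show "0 \<le> (\<Prod>k=1..Suc n. fst (h k))" using AApos[of "Suc n"] by (simp add: AA_def)
    next
      fix N
      have "(\<Sum>k\<le>N. \<Prod>k=1..Suc k. fst (h k)) \<le> (\<Sum>j<Suc (Suc N). AA h j)"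
        using sum_AA_shift[of h N] by (simp add: AA_def)
      also have "\<dots> \<le> Re w / m"
        using Blow[of "Suc (Suc N)"] wb[of "Suc (Suc N)"] mpos by (simp add: field_simps)
      finally show "(\<Sum>k\<le>N. \<Prod>k=1..Suc k. fst (h k)) \<le> Re w / m" .
    qed
  next
    assume sm: "summable (\<lambda>n. \<Prod>k=1..Suc n. fst (h k))"
    define P where "P = 1 + suminf (\<lambda>n. \<Prod>k=1..Suc n. fst (h k))"
    have nn: "0 \<le> (\<Prod>k=1..Suc n. fst (h k))" for n
      using AApos[of "Suc n"] by (simp add: AA_def less_imp_le)
    have sumP: "(\<Sum>j<n. AA h j) \<le> P" for n
    proof (cases n)
      case 0
      have "0 \<le> suminf (\<lambda>n. \<Prod>k=1..Suc n. fst (h k))" by (rule suminf_nonneg[OF sm nn])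
      then show ?thesis using 0 unfolding P_def by simp
    next
      case (Suc N)
      have "(\<Sum>j<n. AA h j) = 1 + (\<Sum>k<N. AA h (Suc k))"
        unfolding Suc sum.lessThan_Suc_shift by (simp add: AA_def)
      also have "(\<Sum>k<N. AA h (Suc k)) \<le> suminf (\<lambda>n. \<Prod>k=1..Suc n. fst (h k))"
        using sum_le_suminf[OF sm, of "{..<N}"] nn by (simp add: AA_def)
      finally show ?thesis unfolding P_def by simp
    qed
    define \<beta> where "\<beta> = (SUP n\<in>{1..}. Re (BB h n))"
    have bdd: "bdd_above ((\<lambda>n. Re (BB h n)) ` {1..})"
    proof (rule bdd_aboveI2)
      fix n
      have "Re (BB h n) \<le> cmod (BB h n)" by (rule complex_Re_le_cmod)
      also have "\<dots> \<le> M * P" using Bup[of n] sumP[of n] M0 by (meson mult_left_mono order_trans)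
      finally show "Re (BB h n) \<le> M * P" .
    qed
    have "{w. \<forall>n\<ge>1. Re (BB h n) \<le> Re w} = {w. \<beta> \<le> Re w}"
      unfolding \<beta>_def using cSUP_le_iff[OF _ bdd] by auto
    then have "I = insert None (Some ` {w. \<beta> \<le> Re w})" using I_eq by simp
    also note ball_halfplane[of \<beta>]
    finally show "limit_disc_type h" unfolding ldt_iff
      by (intro exI conjI[rotated]) (auto simp: add_pos_nonneg)
  qed
  have part2: "q \<noteq> None" if ldt: "limit_disc_type h" and ci: "converges_ideally h q" for q
  proof
    assume qN: "q = None"
    have sm: "summable (\<lambda>n. \<Prod>k=1..Suc n. fst (h k))" using part1 ldt by blast
    define P where "P = 1 + suminf (\<lambda>n. \<Prod>k=1..Suc n. fst (h k))"
    have nn: "0 \<le> (\<Prod>k=1..Suc n. fst (h k))" for n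
      using AApos[of "Suc n"] by (simp add: AA_def less_imp_le)
    have sumP: "(\<Sum>j<n. AA h j) \<le> P" for n
    proof (cases n)
      case 0
      have "0 \<le> suminf (\<lambda>n. \<Prod>k=1..Suc n. fst (h k))" by (rule suminf_nonneg[OF sm nn])
      then show ?thesis using 0 unfolding P_def by simp
    next
      case (Suc N)
      have "(\<Sum>j<n. AA h j) = 1 + (\<Sum>k<N. AA h (Suc k))"
        unfolding Suc sum.lessThan_Suc_shift by (simp add: AA_def)
      also have "(\<Sum>k<N. AA h (Suc k)) \<le> suminf (\<lambda>n. \<Prod>k=1..Suc n. fst (h k))"
        using sum_le_suminf[OF sm, of "{..<N}"] nn by (simp add: AA_def)
      finally show ?thesis unfolding P_def by simp
    qed
    define \<delta> where "\<delta> = 2 / sqrt (1 + (M * P)\<^sup>2 + P\<^sup>2)"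
    have dpos: "\<delta> > 0" unfolding \<delta>_def by (simp add: add_pos_nonneg)
    have seq: "chordal (Some (comp_upto (\<lambda>k. poincare (h k)) n (0, 1))) (emb_hat q)
        = 2 / sqrt (1 + (cmod (BB h n))\<^sup>2 + (AA h n)\<^sup>2)" for n
      using AApos[of n] by (simp add: comp_poinc poincare_def qN emb_hat_def)
    have lower: "\<delta> \<le> 2 / sqrt (1 + (cmod (BB h n))\<^sup>2 + (AA h n)\<^sup>2)" for n
    proof -
      have b1: "cmod (BB h n) \<le> M * P" using Bup[of n] sumP[of n] M0 by (meson mult_left_mono order_trans)
      have "AA h n \<le> (\<Sum>j<Suc n. AA h j)" using AApos
        by (simp add: less_imp_le sum_nonneg)
      then have b2: "AA h n \<le> P" using sumP[of "Suc n"] by linarith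
      have "(cmod (BB h n))\<^sup>2 \<le> (M * P)\<^sup>2" by (rule power_mono[OF b1]) simp
      moreover have "(AA h n)\<^sup>2 \<le> P\<^sup>2" by (rule power_mono[OF b2]) (use AApos less_imp_le in auto)
      ultimately have "sqrt (1 + (cmod (BB h n))\<^sup>2 + (AA h n)\<^sup>2) \<le> sqrt (1 + (M * P)\<^sup>2 + P\<^sup>2)"
        by simp
      then show ?thesis unfolding \<delta>_def
        by (intro divide_left_mono) (auto simp: add_pos_nonneg)
    qed
    have "eventually (\<lambda>n. chordal (Some (comp_upto (\<lambda>k. poincare (h k)) n (0, 1))) (emb_hat q) < \<delta>) sequentially"
      using ci dpos unfolding converges_ideally_def by (rule order_tendstoD(2))
    then obtain N where "\<forall>n\<ge>N. chordal (Some (comp_upto (\<lambda>k. poincare (h k)) n (0, 1))) (emb_hat q) < \<delta>"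
      unfolding eventually_sequentially by blast
    then have "2 / sqrt (1 + (cmod (BB h N))\<^sup>2 + (AA h N)\<^sup>2) < \<delta>" using seq by auto
    then show False using lower[of N] by linarith
  qed
  show ?thesis using part1 part2 by blast
qed

end
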